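(* A homomorphism $a:X\to G$ is a generalized subgroup of $G$ if and only if (a) $\mathrm{Ker}(a)$ is contained in the center of $X$, and (b) $\mathrm{Hom}(X,\mathrm{Ker}(a))=0$.
   Context: A homomorphism $a:X\to G$ is a generalized subgroup of $G$ if the map $\mathrm{Hom}(X,X)\to\mathrm{Hom}(X,G)$, $f\mapsto af$, is injective. $\mathrm{Hom}(A,B)=0$ means the only homomorphism $A\to B$ is trivial. *)

theory Defs
  imports "HOL-Algebra.Algebra"
begin

definition group_center :: "('a, 'm) monoid_scheme \<Rightarrow> 'a set" where
  "group_center H = {z \<in> carrier H. \<forall>x \<in> carrier H. z \<otimes>\<^bsub>H\<^esub> x = x \<otimes>\<^bsub>H\<^esub> z}"

text \<open>Homomorphisms are identified with their restriction to the carrier of the domain.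
  a : X \<rightarrow> G is a generalized subgroup iff f \<mapsto> a \<circ> f from Hom(X,X) to Hom(X,G) is injective.\<close>
definition generalized_subgroup ::
  "('a, 'm) monoid_scheme \<Rightarrow> ('b, 'n) monoid_scheme \<Rightarrow> ('a \<Rightarrow> 'b) \<Rightarrow> bool" where
  "generalized_subgroup H K a \<longleftrightarrow>
     (\<forall>f \<in> hom H H. \<forall>g \<in> hom H H.
        (\<forall>x \<in> carrier H. a (f x) = a (g x)) \<longrightarrow> (\<forall>x \<in> carrier H. f x = g x))"

definition trivial_homs :: "('a, 'm) monoid_scheme \<Rightarrow> ('b, 'n) monoid_scheme \<Rightarrow> bool" where
  "trivial_homs A B \<longleftrightarrow> (\<forall>f \<in> hom A B. \<forall>x \<in> carrier A. f x = \<one>\<^bsub>B\<^esub>)"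

end

theory Submission
  imports Defs
begin

theorem proposition4p2:
  fixes H :: "('a, 'm) monoid_scheme" and G :: "('b, 'n) monoid_scheme" and a :: "'a \<Rightarrow> 'b"
  assumes "group H" and "group G" and "a \<in> hom H G"
  shows "generalized_subgroup H G a \<longleftrightarrow>
           (kernel H G a \<subseteq> group_center H \<and>
            trivial_homs H (H\<lparr>carrier := kernel H G a\<rparr>))"
proof -
  interpret H: group H by fact
  interpret G: group G by fact
  interpret a: group_hom H G a using assms by (simp add: group_hom_def group_hom_axioms_def)
  let ?K = "kernel H G a"
  have Kc: "?K \<subseteq> carrier H" by (auto simp: kernel_def)
  have aK: "\<And>k. k \<in> ?K \<Longrightarrow> a k = \<one>\<^bsub>G\<^esub>" by (auto simp: kernel_def)
  show ?thesis
  proof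
    assume gs: "generalized_subgroup H G a"
    have cent: "?K \<subseteq> group_center H"
    proof
      fix k assume k: "k \<in> ?K"
      hence kH: "k \<in> carrier H" using Kc by auto
      define c where "c = (\<lambda>x. k \<otimes>\<^bsub>H\<^esub> x \<otimes>\<^bsub>H\<^esub> inv\<^bsub>H\<^esub> k)"
      have ch: "c \<in> hom H H"
        unfolding c_def
      proof (rule homI)
        fix x y assume x: "x \<in> carrier H" and y: "y \<in> carrier H"
        have "k \<otimes>\<^bsub>H\<^esub> x \<otimes>\<^bsub>H\<^esub> inv\<^bsub>H\<^esub> k \<otimes>\<^bsub>H\<^esub> (k \<otimes>\<^bsub>H\<^esub> y \<otimes>\<^bsub>H\<^esub> inv\<^bsub>H\<^esub> k)
            = k \<otimes>\<^bsub>H\<^esub> x \<otimes>\<^bsub>H\<^esub> (inv\<^bsub>H\<^esub> k \<otimes>\<^bsub>H\<^esub> k) \<otimes>\<^bsub>H\<^esub> y \<otimes>\<^bsub>H\<^esub> inv\<^bsub>H\<^esub> k"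
          using x y kH by (simp only: H.m_assoc H.m_closed H.inv_closed)
        also have "\<dots> = k \<otimes>\<^bsub>H\<^esub> (x \<otimes>\<^bsub>H\<^esub> y) \<otimes>\<^bsub>H\<^esub> inv\<^bsub>H\<^esub> k"
          using x y kH by (simp add: H.m_assoc)
        finally show "k \<otimes>\<^bsub>H\<^esub> (x \<otimes>\<^bsub>H\<^esub> y) \<otimes>\<^bsub>H\<^esub> inv\<^bsub>H\<^esub> k = k \<otimes>\<^bsub>H\<^esub> x \<otimes>\<^bsub>H\<^esub> inv\<^bsub>H\<^esub> k \<otimes>\<^bsub>H\<^esub> (k \<otimes>\<^bsub>H\<^esub> y \<otimes>\<^bsub>H\<^esub> inv\<^bsub>H\<^esub> k)" by simp
      qed (use kH in auto)
      have idh: "(\<lambda>x. x) \<in> hom H H" by (rule homI) auto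
      have "\<forall>x\<in>carrier H. a (c x) = a x"
      proof
        fix x assume x: "x \<in> carrier H"
        have "a (c x) = a k \<otimes>\<^bsub>G\<^esub> a x \<otimes>\<^bsub>G\<^esub> inv\<^bsub>G\<^esub> a k"
          unfolding c_def using x kH by (simp add: a.hom_mult a.hom_inv)
        thus "a (c x) = a x" using aK[OF k] x by simp
      qed
      hence eq: "\<forall>x\<in>carrier H. c x = x" using gs ch idh unfolding generalized_subgroup_def
        by (metis (no_types, lifting))
      show "k \<in> group_center H" unfolding group_center_def
      proof (intro CollectI conjI ballI kH)
        fix x assume x: "x \<in> carrier H"
        have "k \<otimes>\<^bsub>H\<^esub> x \<otimes>\<^bsub>H\<^esub> inv\<^bsub>H\<^esub> k = x" using eq x unfolding c_def by auto
        hence "k \<otimes>\<^bsub>H\<^esub> x \<otimes>\<^bsub>H\<^esub> inv\<^bsub>H\<^esub> k \<otimes>\<^bsub>H\<^esub> k = x \<otimes>\<^bsub>H\<^esub> k" by simp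
        thus "k \<otimes>\<^bsub>H\<^esub> x = x \<otimes>\<^bsub>H\<^esub> k" using x kH by (simp add: H.m_assoc)
      qed
    qed
    have triv: "trivial_homs H (H\<lparr>carrier := ?K\<rparr>)"
      unfolding trivial_homs_def
    proof (intro ballI)
      fix \<phi> x assume ph: "\<phi> \<in> hom H (H\<lparr>carrier := ?K\<rparr>)" and x: "x \<in> carrier H"
      have phK: "\<And>y. y \<in> carrier H \<Longrightarrow> \<phi> y \<in> ?K" using ph by (auto simp: hom_def Pi_def)
      have phH: "\<And>y. y \<in> carrier H \<Longrightarrow> \<phi> y \<in> carrier H" using phK Kc by auto
      have phm: "\<And>y z. y \<in> carrier H \<Longrightarrow> z \<in> carrier H \<Longrightarrow> \<phi> (y \<otimes>\<^bsub>H\<^esub> z) = \<phi> y \<otimes>\<^bsub>H\<^esub> \<phi> z"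
        using ph by (auto simp: hom_def)
      have com: "\<And>y z. y \<in> carrier H \<Longrightarrow> z \<in> carrier H \<Longrightarrow> \<phi> y \<otimes>\<^bsub>H\<^esub> z = z \<otimes>\<^bsub>H\<^esub> \<phi> y"
        using phK cent by (auto simp: group_center_def)
      define f where "f = (\<lambda>y. y \<otimes>\<^bsub>H\<^esub> \<phi> y)"
      have fh: "f \<in> hom H H"
      proof (rule homI)
        fix y z assume y: "y \<in> carrier H" and z: "z \<in> carrier H"
        have "f (y \<otimes>\<^bsub>H\<^esub> z) = y \<otimes>\<^bsub>H\<^esub> (z \<otimes>\<^bsub>H\<^esub> \<phi> y) \<otimes>\<^bsub>H\<^esub> \<phi> z"
          unfolding f_def using y z phH com[OF y z] by (simp add: phm H.m_assoc)
        also have "\<dots> = y \<otimes>\<^bsub>H\<^esub> (\<phi> y \<otimes>\<^bsub>H\<^esub> z) \<otimes>\<^bsub>H\<^esub> \<phi> z"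
          using com[OF y z] by simp
        also have "\<dots> = f y \<otimes>\<^bsub>H\<^esub> f z"
          unfolding f_def using y z phH by (simp add: H.m_assoc)
        finally show "f (y \<otimes>\<^bsub>H\<^esub> z) = f y \<otimes>\<^bsub>H\<^esub> f z" .
      qed (use phH in \<open>auto simp: f_def\<close>)
      have idh: "(\<lambda>x. x) \<in> hom H H" by (rule homI) auto
      have "\<forall>y\<in>carrier H. a (f y) = a y"
        using phH aK phK by (auto simp: f_def a.hom_mult)
      hence "\<forall>y\<in>carrier H. f y = y" using gs fh idh unfolding generalized_subgroup_def
        by (metis (no_types, lifting))
      hence "x \<otimes>\<^bsub>H\<^esub> \<phi> x = x \<otimes>\<^bsub>H\<^esub> \<one>\<^bsub>H\<^esub>" using x by (simp add: f_def)
      hence "\<phi> x = \<one>\<^bsub>H\<^esub>" using x phH[OF x] H.l_cancel by blast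
      thus "\<phi> x = \<one>\<^bsub>H\<lparr>carrier := ?K\<rparr>\<^esub>" by simp
    qed
    show "?K \<subseteq> group_center H \<and> trivial_homs H (H\<lparr>carrier := ?K\<rparr>)" using cent triv by blast
  next
    assume R: "?K \<subseteq> group_center H \<and> trivial_homs H (H\<lparr>carrier := ?K\<rparr>)"
    show "generalized_subgroup H G a" unfolding generalized_subgroup_def
    proof (intro ballI impI)
      fix f g x assume fh: "f \<in> hom H H" and gh: "g \<in> hom H H"
        and e: "\<forall>x\<in>carrier H. a (f x) = a (g x)" and x: "x \<in> carrier H"
      have fH: "\<And>y. y \<in> carrier H \<Longrightarrow> f y \<in> carrier H" using fh by (auto simp: hom_def)
      have gH: "\<And>y. y \<in> carrier H \<Longrightarrow> g y \<in> carrier H" using gh by (auto simp: hom_def)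
      have fm: "\<And>y z. y \<in> carrier H \<Longrightarrow> z \<in> carrier H \<Longrightarrow> f (y \<otimes>\<^bsub>H\<^esub> z) = f y \<otimes>\<^bsub>H\<^esub> f z"
        using fh by (auto simp: hom_def)
      have gm: "\<And>y z. y \<in> carrier H \<Longrightarrow> z \<in> carrier H \<Longrightarrow> g (y \<otimes>\<^bsub>H\<^esub> z) = g y \<otimes>\<^bsub>H\<^esub> g z"
        using gh by (auto simp: hom_def)
      define \<phi> where "\<phi> = (\<lambda>y. f y \<otimes>\<^bsub>H\<^esub> inv\<^bsub>H\<^esub> g y)"
      have phK: "\<And>y. y \<in> carrier H \<Longrightarrow> \<phi> y \<in> ?K"
      proof -
        fix y assume y: "y \<in> carrier H"
        have "a (\<phi> y) = a (g y) \<otimes>\<^bsub>G\<^esub> inv\<^bsub>G\<^esub> a (g y)"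
          unfolding \<phi>_def using y fH gH e by (simp add: a.hom_mult a.hom_inv)
        also have "\<dots> = \<one>\<^bsub>G\<^esub>" using y gH by simp
        finally show "\<phi> y \<in> ?K" using y fH gH by (simp add: kernel_def \<phi>_def)
      qed
      have com: "\<And>y z. y \<in> carrier H \<Longrightarrow> z \<in> carrier H \<Longrightarrow> \<phi> y \<otimes>\<^bsub>H\<^esub> z = z \<otimes>\<^bsub>H\<^esub> \<phi> y"
        using phK R by (auto simp: group_center_def)
      have phH: "\<And>y. y \<in> carrier H \<Longrightarrow> \<phi> y \<in> carrier H" using phK Kc by auto
      have phh: "\<phi> \<in> hom H (H\<lparr>carrier := ?K\<rparr>)"
      proof (rule homI)
        fix y z assume y: "y \<in> carrier H" and z: "z \<in> carrier H"
        have "\<phi> (y \<otimes>\<^bsub>H\<^esub> z) = f y \<otimes>\<^bsub>H\<^esub> \<phi> z \<otimes>\<^bsub>H\<^esub> inv\<^bsub>H\<^esub> g y"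
          unfolding \<phi>_def using y z fH gH by (simp add: fm gm H.m_assoc H.inv_mult_group)
        also have "\<dots> = (\<phi> z \<otimes>\<^bsub>H\<^esub> f y) \<otimes>\<^bsub>H\<^esub> inv\<^bsub>H\<^esub> g y"
          using com[OF z fH[OF y]] by simp
        also have "\<dots> = \<phi> z \<otimes>\<^bsub>H\<^esub> \<phi> y"
          using y z fH gH phH by (simp add: \<phi>_def H.m_assoc)
        also have "\<dots> = \<phi> y \<otimes>\<^bsub>H\<^esub> \<phi> z" using com[OF y phH[OF z]] by simp
        finally show "\<phi> (y \<otimes>\<^bsub>H\<^esub> z) = \<phi> y \<otimes>\<^bsub>H\<lparr>carrier := ?K\<rparr>\<^esub> \<phi> z" by simp
      qed (use phK in auto)
      have "\<phi> x = \<one>\<^bsub>H\<^esub>" using R phh x unfolding trivial_homs_def by fastforce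
      hence "f x \<otimes>\<^bsub>H\<^esub> inv\<^bsub>H\<^esub> g x \<otimes>\<^bsub>H\<^esub> g x = g x" using x gH by (simp add: \<phi>_def)
      thus "f x = g x" using x fH gH by (simp add: H.m_assoc)
    qed
  qed
qed

end
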